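(* Let $G$ be a discrete abelian group, let $X,Y$ be independent finitely supported $G$-valued random variables with $\mathbb{H}(X+Y)-\mathbb{H}(Y)\le\frac1{16}$, and let $\epsilon\in(0,1)$. Let $B=B(\mathrm{LSpec}(Y,\epsilon),4\epsilon)$. Let $Z$ be another finitely supported $G$-valued random variable. Then there is a set $S\subset\operatorname{supp}(X)$ such that $\log|S|\ge \mathbb{H}(Z)-4\,\mathrm{d}[X;Z]-2\log 2$ and $S-S\subset B$.
   Context: $\log$ is natural. $\mathbb{H}(X)=\sum_x p_X(x)\log(1/p_X(x))$ with $p_X(x)=\mathbb{P}(X=x)$. $\mathrm{d}[X;Z]=\mathbb{H}(X'-Z')-\tfrac12\mathbb{H}(X)-\tfrac12\mathbb{H}(Z)$ with $X',Z'$ independent copies of $X,Z$. $\hat G$ is the group of homomorphisms $G\to S^1=\{z\in\mathbb{C}:|z|=1\}$, and for $f\in\ell^1(G)$, $\hat f(\gamma)=\sum_{x\in G}f(x)\overline{\gamma(x)}$. $\mathrm{LSpec}(Y,\epsilon)=\{\gamma\in\hat G:|\hat{p_Y}(\gamma)|^2\ge 1-\epsilon^2/2\}$. For $\Gamma\subset\hat G$ and $\delta\in(0,2]$ (or larger), the Bohr set is $B(\Gamma,\delta)=\{x\in G:|\gamma(x)-1|\le\delta\text{ for all }\gamma\in\Gamma\}$. $S-S=\{s-s':s,s'\in S\}$. *)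

theory Defs
  imports "HOL-Probability.Probability"
begin

text \<open>Finitely supported G-valued random variables are represented by their
  distributions (pmfs with finite support). Independence of two variables is
  encoded by taking the product distribution.\<close>

definition entropy_pmf :: "'a pmf \<Rightarrow> real" where
  "entropy_pmf p = (\<Sum>x\<in>set_pmf p. pmf p x * ln (1 / pmf p x))"

definition sum_dist :: "'a::ab_group_add pmf \<Rightarrow> 'a pmf \<Rightarrow> 'a pmf" where
  "sum_dist p q = map_pmf (\<lambda>(x, y). x + y) (pair_pmf p q)"

definition diff_dist :: "'a::ab_group_add pmf \<Rightarrow> 'a pmf \<Rightarrow> 'a pmf" where
  "diff_dist p q = map_pmf (\<lambda>(x, z). x - z) (pair_pmf p q)"

definition ruzsa_dist :: "'a::ab_group_add pmf \<Rightarrow> 'a pmf \<Rightarrow> real" where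
  "ruzsa_dist p q = entropy_pmf (diff_dist p q) - entropy_pmf p / 2 - entropy_pmf q / 2"

definition characters :: "('a::ab_group_add \<Rightarrow> complex) set" where
  "characters = {\<gamma>. (\<forall>x y. \<gamma> (x + y) = \<gamma> x * \<gamma> y) \<and> (\<forall>x. cmod (\<gamma> x) = 1)}"

definition fourier_pmf :: "'a::ab_group_add pmf \<Rightarrow> ('a \<Rightarrow> complex) \<Rightarrow> complex" where
  "fourier_pmf p \<gamma> = (\<Sum>x\<in>set_pmf p. complex_of_real (pmf p x) * cnj (\<gamma> x))"

definition LSpec :: "'a::ab_group_add pmf \<Rightarrow> real \<Rightarrow> ('a \<Rightarrow> complex) set" where
  "LSpec p \<epsilon> = {\<gamma>\<in>characters. (cmod (fourier_pmf p \<gamma>))\<^sup>2 \<ge> 1 - \<epsilon>\<^sup>2 / 2}"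

definition bohr_set :: "('a \<Rightarrow> complex) set \<Rightarrow> real \<Rightarrow> 'a set" where
  "bohr_set \<Gamma> \<delta> = {x. \<forall>\<gamma>\<in>\<Gamma>. cmod (\<gamma> x - 1) \<le> \<delta>}"

end

theory Submission imports Defs begin
lemma sum_dist_bind: "sum_dist p q = bind_pmf p (\<lambda>x. map_pmf (\<lambda>y. x + y) q)"
  unfolding sum_dist_def pair_pmf_def
  by (simp add: map_bind_pmf map_return_pmf) (simp add: map_pmf_def)
lemma diff_dist_bind: "diff_dist p q = bind_pmf p (\<lambda>x. map_pmf (\<lambda>y. x - y) q)"
  unfolding diff_dist_def pair_pmf_def
  by (simp add: map_bind_pmf map_return_pmf) (simp add: map_pmf_def)
lemma pmf_shift: "pmf (map_pmf (\<lambda>y. x + y) q) z = pmf q (z - (x::'a::ab_group_add))"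
proof -
  have "pmf (map_pmf (\<lambda>y. x + y) q) (x + (z - x)) = pmf q (z - x)"
    by (rule pmf_map_inj') (auto simp: inj_def)
  then show ?thesis by simp
qed
lemma pmf_shift2: "pmf (map_pmf (\<lambda>y. x - y) q) z = pmf q (x - (z::'a::ab_group_add))"
proof -
  have "pmf (map_pmf (\<lambda>y. x - y) q) (x - (x - z)) = pmf q (x - z)"
    by (rule pmf_map_inj') (auto simp: inj_def)
  then show ?thesis by simp
qed
lemma pmf_sum_dist:
  fixes p q :: "'a::ab_group_add pmf"
  assumes "finite (set_pmf p)"
  shows "pmf (sum_dist p q) z = (\<Sum>x\<in>set_pmf p. pmf p x * pmf q (z - x))"
  unfolding sum_dist_bind pmf_bind pmf_shift
  by (subst integral_measure_pmf[OF assms]) (auto simp: mult.commute)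
lemma pmf_diff_dist:
  fixes p q :: "'a::ab_group_add pmf"
  assumes "finite (set_pmf p)"
  shows "pmf (diff_dist p q) z = (\<Sum>x\<in>set_pmf p. pmf p x * pmf q (x - z))"
  unfolding diff_dist_bind pmf_bind pmf_shift2
  by (subst integral_measure_pmf[OF assms]) (auto simp: mult.commute)
lemma set_sum_dist: "set_pmf (sum_dist p q) = (\<lambda>(x,y). x + y) ` (set_pmf p \<times> set_pmf q)"
  by (simp add: sum_dist_def)
lemma set_diff_dist: "set_pmf (diff_dist p q) = (\<lambda>(x,y). x - y) ` (set_pmf p \<times> set_pmf q)"
  by (simp add: diff_dist_def)

lemma sum_reindex_nz:
  fixes K :: "'b \<Rightarrow> 'c::comm_monoid_add"
  assumes "finite V" "finite A"
    and "\<And>a. a \<in> A \<Longrightarrow> K a \<noteq> 0 \<Longrightarrow> \<psi> a \<in> V \<and> \<phi> (\<psi> a) = a"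
    and "\<And>v. v \<in> V \<Longrightarrow> K (\<phi> v) \<noteq> 0 \<Longrightarrow> \<phi> v \<in> A \<and> \<psi> (\<phi> v) = v"
  shows "(\<Sum>v\<in>V. K (\<phi> v)) = (\<Sum>a\<in>A. K a)"
  apply (rule sum.reindex_bij_witness_not_neutral[where S'="{v\<in>V. K (\<phi> v) = 0}"
        and T'="{a\<in>A. K a = 0}" and i=\<psi> and j=\<phi>])
  using assms by auto

definition Ent :: "'b set \<Rightarrow> ('b \<Rightarrow> real) \<Rightarrow> real" where
  "Ent V g = (\<Sum>v\<in>V. g v * ln (sum g V / g v))"

lemma Ent_reindex:
  assumes "finite V" "finite A"
    and "\<And>a. a \<in> A \<Longrightarrow> F a \<noteq> 0 \<Longrightarrow> \<psi> a \<in> V \<and> \<phi> (\<psi> a) = a"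
    and "\<And>v. v \<in> V \<Longrightarrow> F (\<phi> v) \<noteq> 0 \<Longrightarrow> \<phi> v \<in> A \<and> \<psi> (\<phi> v) = v"
  shows "Ent V (\<lambda>v. F (\<phi> v)) = Ent A F"
proof -
  have s: "(\<Sum>v\<in>V. F (\<phi> v)) = sum F A"
    by (rule sum_reindex_nz[OF assms])
  show ?thesis unfolding Ent_def s
    by (rule sum_reindex_nz[where K="\<lambda>t. F t * ln (sum F A / F t)"]) (use assms in auto)
qed

lemma Ent_cong:
  assumes "\<And>v. v \<in> V \<Longrightarrow> f v = g v"
  shows "Ent V f = Ent V g"
  unfolding Ent_def using assms by (simp add: sum.cong[OF refl, of V f g])

lemma Ent_zero: "Ent V (\<lambda>v. 0) = 0"
  by (simp add: Ent_def)

lemma Ent_scale: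
  assumes "c \<ge> 0"
  shows "Ent V (\<lambda>v. c * g v) = c * Ent V g"
proof (cases "c = 0")
  case True then show ?thesis by (simp add: Ent_def)
next
  case False
  then have "c > 0" using assms by simp
  have s: "sum (\<lambda>v. c * g v) V = c * sum g V" by (simp add: sum_distrib_left)
  show ?thesis unfolding Ent_def s sum_distrib_left[of c "\<lambda>v. g v * ln (sum g V / g v)"]
    by (rule sum.cong) (use \<open>c > 0\<close> in auto)
qed

lemma ln_ineq:
  fixes a b :: real
  assumes "a \<ge> 0" "b > 0"
  shows "a * ln (a / b) \<ge> a - b"
proof (cases "a = 0")
  case True then show ?thesis using assms by simp
next
  case False
  then have a: "a > 0" using assms by simp
  have "ln (b / a) \<le> b / a - 1" using ln_le_minus_one a assms by simp
  then have "a * ln (b / a) \<le> a * (b / a - 1)" using a by (simp add: mult_left_mono)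
  also have "\<dots> = b - a" using a by (simp add: field_simps)
  finally have "a * ln (b / a) \<le> b - a" .
  moreover have "ln (a / b) = - ln (b / a)" using a assms by (simp add: ln_div)
  ultimately show ?thesis by simp
qed

lemma pw1:
  fixes f g mf m :: real
  assumes "f \<ge> 0" "g \<ge> 0" "mf > 0" "m > 0"
  shows "f * ln (m / (f + g)) - f * ln (mf / f) \<ge> f - mf * (f + g) / m"
proof (cases "f = 0")
  case True then show ?thesis using assms by simp
next
  case False
  then have f: "f > 0" using assms by simp
  define b where "b = mf * (f + g) / m"
  have b: "b > 0" unfolding b_def using f assms by simp
  have "ln (f / b) = ln (m / (f + g)) - ln (mf / f)"
    unfolding b_def using f assms by (simp add: ln_div ln_mult)
  then have "f * ln (m / (f + g)) - f * ln (mf / f) = f * ln (f / b)"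
    by (simp add: right_diff_distrib)
  also have "\<dots> \<ge> f - b" by (rule ln_ineq) (use f b in auto)
  finally show ?thesis unfolding b_def .
qed

lemma Ent_superadd2:
  assumes "finite V" "\<And>v. v \<in> V \<Longrightarrow> f v \<ge> 0" "\<And>v. v \<in> V \<Longrightarrow> g v \<ge> 0"
  shows "Ent V (\<lambda>v. f v + g v) \<ge> Ent V f + Ent V g"
proof -
  define mf where "mf = sum f V"
  define mg where "mg = sum g V"
  have mf0: "mf \<ge> 0" unfolding mf_def using assms by (simp add: sum_nonneg)
  have mg0: "mg \<ge> 0" unfolding mg_def using assms by (simp add: sum_nonneg)
  show ?thesis
  proof (cases "mf = 0")
    case True
    then have "\<forall>v\<in>V. f v = 0" unfolding mf_def using assms sum_nonneg_eq_0_iff by blast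
    then show ?thesis by (simp add: Ent_cong[of V "\<lambda>v. f v + g v" g] Ent_cong[of V f "\<lambda>v. 0"] Ent_zero)
  next
    case mfn: False
    show ?thesis
    proof (cases "mg = 0")
      case True
      then have "\<forall>v\<in>V. g v = 0" unfolding mg_def using assms sum_nonneg_eq_0_iff by blast
      then show ?thesis by (simp add: Ent_cong[of V "\<lambda>v. f v + g v" f] Ent_cong[of V g "\<lambda>v. 0"] Ent_zero)
    next
      case False
      have mfp: "mf > 0" using mfn mf0 by simp
      have mgp: "mg > 0" using False mg0 by simp
      have msum: "sum (\<lambda>v. f v + g v) V = mf + mg" unfolding mf_def mg_def by (simp add: sum.distrib)
      have "Ent V (\<lambda>v. f v + g v) - Ent V f - Ent V g =
          (\<Sum>v\<in>V. (f v * ln ((mf + mg) / (f v + g v)) - f v * ln (mf / f v))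
                + (g v * ln ((mf + mg) / (g v + f v)) - g v * ln (mg / g v)))"
        unfolding Ent_def msum mf_def[symmetric] mg_def[symmetric]
        by (simp add: sum_subtractf[symmetric] sum.distrib[symmetric] algebra_simps)
      also have "\<dots> \<ge> (\<Sum>v\<in>V. (f v - mf * (f v + g v) / (mf + mg)) + (g v - mg * (g v + f v) / (mf + mg)))"
        apply (rule sum_mono)
        apply (rule add_mono)
         apply (rule pw1) using assms mfp mgp apply auto[4]
        apply (rule pw1) using assms mfp mgp apply auto[4]
        done
      also have "(\<Sum>v\<in>V. (f v - mf * (f v + g v) / (mf + mg)) + (g v - mg * (g v + f v) / (mf + mg))) = 0"
        apply (rule sum.neutral)
        using mfp mgp by (auto simp: field_simps)
      finally show ?thesis by simp
    qed
  qed
qed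

lemma Ent_superadd:
  assumes "finite V" "finite I" "\<And>i v. i \<in> I \<Longrightarrow> v \<in> V \<Longrightarrow> g i v \<ge> 0"
  shows "Ent V (\<lambda>v. \<Sum>i\<in>I. g i v) \<ge> (\<Sum>i\<in>I. Ent V (g i))"
  using assms(2,3)
proof (induction I rule: finite_induct)
  case empty then show ?case by (simp add: Ent_zero)
next
  case (insert i I)
  have "(\<Sum>j\<in>insert i I. Ent V (g j)) = Ent V (g i) + (\<Sum>j\<in>I. Ent V (g j))"
    using insert by simp
  also have "\<dots> \<le> Ent V (g i) + Ent V (\<lambda>v. \<Sum>j\<in>I. g j v)"
    using insert by simp
  also have "\<dots> \<le> Ent V (\<lambda>v. g i v + (\<Sum>j\<in>I. g j v))"
    by (rule Ent_superadd2) (use assms(1) insert in \<open>auto intro: sum_nonneg\<close>)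
  also have "\<dots> = Ent V (\<lambda>v. \<Sum>j\<in>insert i I. g j v)"
    using insert by simp
  finally show ?case .
qed

lemma Ent_gibbs:
  assumes "finite V" "\<And>v. v \<in> V \<Longrightarrow> g v \<ge> 0"
  shows "Ent V g \<le> sum g V * ln (card V)"
proof (cases "V = {}")
  case True then show ?thesis by (simp add: Ent_def)
next
  case ne: False
  define m where "m = sum g V"
  define N where "N = real (card V)"
  have N: "N > 0" unfolding N_def using ne assms by (simp add: card_gt_0_iff)
  have m0: "m \<ge> 0" unfolding m_def using assms by (simp add: sum_nonneg)
  have pw: "g v * ln (m / g v) - g v * ln N \<le> m / N - g v" if "v \<in> V" for v
  proof (cases "g v = 0")
    case True then show ?thesis using m0 N by simp
  next
    case False
    then have gp: "g v > 0" using assms that by force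
    show ?thesis
    proof (cases "m = 0")
      case True
      have "g v \<le> m" unfolding m_def by (rule member_le_sum) (use assms that in auto)
      then show ?thesis using gp True by simp
    next
      case False
      then have mp: "m > 0" using m0 by simp
      have "ln (m / (g v * N)) \<le> m / (g v * N) - 1"
        by (rule ln_le_minus_one) (use mp gp N in simp)
      then have "g v * ln (m / (g v * N)) \<le> g v * (m / (g v * N) - 1)"
        using gp by (simp add: mult_left_mono)
      moreover have "ln (m / (g v * N)) = ln (m / g v) - ln N" using mp gp N
        by (simp add: ln_div ln_mult)
      moreover have "g v * (m / (g v * N) - 1) = m / N - g v" using gp N by (simp add: field_simps)
      ultimately show ?thesis by (simp add: right_diff_distrib)
    qed
  qed
  have "Ent V g - m * ln N = (\<Sum>v\<in>V. g v * ln (m / g v) - g v * ln N)"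
    unfolding Ent_def m_def by (simp add: sum_subtractf sum_distrib_right)
  also have "\<dots> \<le> (\<Sum>v\<in>V. m / N - g v)" by (rule sum_mono) (use pw in auto)
  also have "\<dots> = 0" using N unfolding m_def N_def by (simp add: sum_subtractf)
  finally show ?thesis unfolding m_def N_def by simp
qed

lemma Ent_pmf:
  assumes "finite V" "set_pmf p \<subseteq> V"
  shows "Ent V (pmf p) = entropy_pmf p"
proof -
  have "sum (pmf p) V = 1" using assms by (rule sum_pmf_eq_1)
  then have "Ent V (pmf p) = (\<Sum>v\<in>V. pmf p v * ln (1 / pmf p v))" by (simp add: Ent_def)
  also have "\<dots> = (\<Sum>v\<in>set_pmf p. pmf p v * ln (1 / pmf p v))"
    by (rule sum.mono_neutral_right) (use assms in \<open>auto simp: set_pmf_eq\<close>)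
  finally show ?thesis by (simp add: entropy_pmf_def)
qed

lemma Ent_pos_split:
  assumes "finite V" "\<And>v. v \<in> V \<Longrightarrow> g v > 0"
  shows "(\<Sum>v\<in>V. g v * ln (1 / g v)) = Ent V g + sum g V * ln (1 / sum g V)"
proof (cases "V = {}")
  case True then show ?thesis by (simp add: Ent_def)
next
  case False
  then have mp: "sum g V > 0" using assms by (simp add: sum_pos)
  have "Ent V g = (\<Sum>v\<in>V. g v * ln (1 / g v) + g v * ln (sum g V))"
    unfolding Ent_def
    apply (rule sum.cong[OF refl])
    using assms mp by (simp add: ln_div distrib_left[symmetric])
  moreover have "ln (1 / sum g V) = - ln (sum g V)" using mp by (simp add: ln_div)
  ultimately show ?thesis by (simp add: sum.distrib sum_distrib_right)
qed

lemma binary_entropy: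
  fixes q :: real
  assumes "0 \<le> q" "q \<le> 1"
  shows "q * ln (1 / q) + (1 - q) * ln (1 / (1 - q)) \<le> ln 2"
proof -
  define g where "g = (\<lambda>b::bool. if b then q else 1 - q)"
  have "Ent UNIV g \<le> sum g UNIV * ln (card (UNIV::bool set))"
    by (rule Ent_gibbs) (use assms in \<open>auto simp: g_def\<close>)
  moreover have "sum g UNIV = 1" by (simp add: g_def UNIV_bool)
  moreover have "Ent UNIV g = q * ln (1 / q) + (1 - q) * ln (1 / (1 - q))"
    unfolding Ent_def by (simp add: g_def UNIV_bool)
  ultimately show ?thesis by simp
qed


lemma entropy_part:
  fixes pX pZ :: "'a::ab_group_add pmf"
  assumes fX: "finite (set_pmf pX)" and fZ: "finite (set_pmf pZ)"
    and SsX: "S \<subseteq> set_pmf pX" and q2: "sum (pmf pX) S \<ge> 1/2"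
  shows "ln (real (card S)) \<ge> entropy_pmf pZ - 4 * ruzsa_dist pX pZ - 2 * ln 2"
proof -
  define SX where "SX = set_pmf pX"
  define SZ where "SZ = set_pmf pZ"
  define V where "V = set_pmf (diff_dist pX pZ)"
  have V: "V = (\<lambda>(x,y). x - y) ` (SX \<times> SZ)" unfolding V_def SX_def SZ_def by (rule set_diff_dist)
  have fV: "finite V" unfolding V using fX fZ SX_def SZ_def by simp
  have fSX: "finite SX" using fX SX_def by simp
  have fSZ: "finite SZ" using fZ SZ_def by simp
  define GR where "GR R v = (\<Sum>x\<in>R. pmf pX x * pmf pZ (x - v))" for R v
  define h where "h = entropy_pmf pZ"
  have hZ: "Ent SZ (pmf pZ) = h" unfolding h_def SZ_def by (rule Ent_pmf) (use fZ in auto)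
  have B1: "Ent V (GR R) \<ge> sum (pmf pX) R * h" if R: "R \<subseteq> SX" for R
  proof -
    have fR: "finite R" using R fSX finite_subset by blast
    have e: "Ent V (\<lambda>v. pmf pZ (x - v)) = h" if x: "x \<in> R" for x
    proof -
      have "Ent V (\<lambda>v. pmf pZ (x - v)) = Ent SZ (pmf pZ)"
        apply (rule Ent_reindex[where \<psi>="\<lambda>z. x - z"])
        using fV fSZ x R apply (auto simp: V SZ_def set_pmf_iff)
        done
      then show ?thesis using hZ by simp
    qed
    have "(\<Sum>x\<in>R. Ent V (\<lambda>v. pmf pX x * pmf pZ (x - v))) \<le> Ent V (\<lambda>v. \<Sum>x\<in>R. pmf pX x * pmf pZ (x - v))"
      by (rule Ent_superadd) (use fV fR in auto)
    moreover have "(\<Sum>x\<in>R. Ent V (\<lambda>v. pmf pX x * pmf pZ (x - v))) = (\<Sum>x\<in>R. pmf pX x * h)"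
      by (rule sum.cong) (auto simp: Ent_scale e)
    ultimately show ?thesis unfolding GR_def by (simp add: sum_distrib_right)
  qed
  have B2: "Ent V (GR R) \<ge> Ent R (pmf pX)" if R: "R \<subseteq> SX" for R
  proof -
    have fR: "finite R" using R fSX finite_subset by blast
    define pXR where "pXR t = (if t \<in> R then pmf pX t else 0)" for t
    have id: "GR R v = (\<Sum>z\<in>SZ. pmf pZ z * pXR (v + z))" for v
    proof -
      have "(\<Sum>z\<in>SZ. (\<lambda>t. pXR t * pmf pZ (t - v)) (v + z)) = (\<Sum>t\<in>R. (\<lambda>t. pXR t * pmf pZ (t - v)) t)"
        apply (rule sum_reindex_nz[where \<psi>="\<lambda>t. t - v"])
        using fSZ fR by (auto simp: SZ_def set_pmf_iff pXR_def split: if_splits)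
      then show ?thesis unfolding GR_def by (simp add: pXR_def mult.commute)
    qed
    have e: "Ent V (\<lambda>v. pXR (v + z)) = Ent R (pmf pX)" if z: "z \<in> SZ" for z
    proof -
      have "Ent V (\<lambda>v. pXR (v + z)) = Ent R pXR"
        apply (rule Ent_reindex[where \<psi>="\<lambda>a. a - z"])
        using fV fR z R apply (auto simp: V pXR_def split: if_splits)
        done
      also have "\<dots> = Ent R (pmf pX)" by (rule Ent_cong) (simp add: pXR_def)
      finally show ?thesis .
    qed
    have "(\<Sum>z\<in>SZ. Ent V (\<lambda>v. pmf pZ z * pXR (v + z))) \<le> Ent V (\<lambda>v. \<Sum>z\<in>SZ. pmf pZ z * pXR (v + z))"
      by (rule Ent_superadd) (use fV fSZ in \<open>auto simp: pXR_def\<close>)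
    moreover have "(\<Sum>z\<in>SZ. Ent V (\<lambda>v. pmf pZ z * pXR (v + z))) = (\<Sum>z\<in>SZ. pmf pZ z * Ent R (pmf pX))"
      by (rule sum.cong) (auto simp: Ent_scale e)
    moreover have "sum (pmf pZ) SZ = 1" unfolding SZ_def by (rule sum_pmf_eq_1) (use fZ in auto)
    ultimately show ?thesis unfolding id by (simp add: sum_distrib_right[symmetric])
  qed
  define R where "R = SX - S"
  have SsX': "S \<subseteq> SX" using SsX SX_def by simp
  have RsX: "R \<subseteq> SX" unfolding R_def by auto
  have fS: "finite S" using SsX' fSX finite_subset by blast
  have fR: "finite R" using RsX fSX finite_subset by blast
  have D: "pmf (diff_dist pX pZ) v = GR S v + GR R v" for v
  proof -
    have "pmf (diff_dist pX pZ) v = GR SX v" unfolding GR_def SX_def by (rule pmf_diff_dist[OF fX])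
    also have "\<dots> = GR S v + GR R v" unfolding GR_def R_def
      using sum.subset_diff[OF SsX' fSX] by (simp add: add.commute)
    finally show ?thesis .
  qed
  define HD where "HD = entropy_pmf (diff_dist pX pZ)"
  define HX where "HX = entropy_pmf pX"
  have HD: "HD = Ent V (\<lambda>v. GR S v + GR R v)"
    unfolding HD_def D[symmetric] by (rule Ent_pmf[symmetric]) (use fV V_def in auto)
  have HDge: "HD \<ge> Ent V (GR S) + Ent V (GR R)"
    unfolding HD by (rule Ent_superadd2) (use fV in \<open>auto simp: GR_def intro!: sum_nonneg\<close>)
  have HXE: "HX = Ent SX (pmf pX)" unfolding HX_def SX_def by (rule Ent_pmf[symmetric]) (use fX in auto)
  have GSX: "GR SX v = GR S v + GR R v" for v unfolding GR_def R_def
      using sum.subset_diff[OF SsX' fSX] by (simp add: add.commute)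
  have HDX: "HD = Ent V (GR SX)" using HD GSX by presburger
  have s1: "sum (pmf pX) SX = 1" using sum_pmf_eq_1[OF fX, of pX] SX_def by simp
  have HD1: "HD \<ge> h" using B1[of SX] HDX s1 by simp
  have HD2: "HD \<ge> HX" using B2[of SX] HDX HXE by simp
  define q where "q = sum (pmf pX) S"
  define r where "r = sum (pmf pX) R"
  have qr: "q + r = 1" unfolding q_def r_def R_def
    using sum.subset_diff[OF SsX' fSX, of "pmf pX"] s1 by simp
  have q0: "q \<ge> 1/2" using q2 q_def by simp
  have r0: "r \<ge> 0" unfolding r_def by (simp add: sum_nonneg)
  define L where "L = ln (real (card S))"
  have pos: "\<And>x. x \<in> SX \<Longrightarrow> pmf pX x > 0" unfolding SX_def by (simp add: pmf_positive)
  have HXs: "HX = (\<Sum>x\<in>S. pmf pX x * ln (1 / pmf pX x)) + (\<Sum>x\<in>R. pmf pX x * ln (1 / pmf pX x))"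
    unfolding HX_def entropy_pmf_def SX_def[symmetric] R_def
    using sum.subset_diff[OF SsX' fSX] by (simp add: add.commute)
  have HS: "(\<Sum>x\<in>S. pmf pX x * ln (1 / pmf pX x)) = Ent S (pmf pX) + q * ln (1 / q)"
    unfolding q_def by (rule Ent_pos_split) (use fS pos SsX' in auto)
  have HR: "(\<Sum>x\<in>R. pmf pX x * ln (1 / pmf pX x)) = Ent R (pmf pX) + r * ln (1 / r)"
    unfolding r_def by (rule Ent_pos_split) (use fR pos RsX in auto)
  have gS: "Ent S (pmf pX) \<le> q * L" unfolding q_def L_def by (rule Ent_gibbs) (use fS in auto)
  have bin: "q * ln (1 / q) + r * ln (1 / r) \<le> ln 2"
  proof -
    have "r = 1 - q" using qr by simp
    then show ?thesis using binary_entropy[of q] q0 r0 by simp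
  qed
  have rd: "ruzsa_dist pX pZ = HD - HX / 2 - h / 2" unfolding ruzsa_dist_def HD_def HX_def h_def by simp
  have ln2: "ln (2::real) \<ge> 0" by simp
  have rd4: "4 * ruzsa_dist pX pZ = 4 * HD - 2 * HX - 2 * h" unfolding rd by (simp add: algebra_simps)
  have BS: "Ent V (GR S) \<ge> q * h" using B1[OF SsX'] q_def by simp
  have BR1: "Ent V (GR R) \<ge> r * h" using B1[OF RsX] r_def by simp
  have BR2: "Ent V (GR R) \<ge> Ent R (pmf pX)" using B2[OF RsX] .
  show ?thesis
  proof (cases "h \<le> L")
    case True
    then show ?thesis unfolding rd4 L_def[symmetric] h_def[symmetric] using HD1 HD2 ln2 by linarith
  next
    case False
    have key: "(2 * q - 1) * (h - L) \<ge> 0" using False q0 by simp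
    have rh: "r * h = h - q * h"
    proof -
      have "r = 1 - q" using qr by simp
      then have "r * h = (1 - q) * h" by simp
      then show ?thesis by (simp add: left_diff_distrib)
    qed
    show ?thesis unfolding rd4 L_def[symmetric] h_def[symmetric]
      using key rh HDge BS BR1 BR2 HXs HS HR gS bin by (simp add: algebra_simps)
  qed
qed


lemma pw2:
  fixes f w :: real
  assumes "f \<ge> 0" "w \<ge> 0" "f > 0 \<Longrightarrow> w > 0"
  shows "f * ln (1 / w) - f * ln (1 / f) \<ge> 2 * (f - sqrt (f * w))"
proof (cases "f = 0")
  case True then show ?thesis by simp
next
  case False
  then have f: "f > 0" using assms by simp
  then have w: "w > 0" using assms by simp
  define s where "s = sqrt f"
  define u where "u = sqrt w"
  have s: "s > 0" "f = s^2" unfolding s_def using f by auto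
  have u: "u > 0" "w = u^2" unfolding u_def using w by auto
  have sq: "sqrt (f * w) = s * u" unfolding s_def u_def by (simp add: real_sqrt_mult)
  have "ln (u / s) \<le> u / s - 1" by (rule ln_le_minus_one) (use s u in simp)
  then have "s^2 * ln (u / s) \<le> s^2 * (u / s - 1)" using s by (simp add: mult_left_mono)
  moreover have "s^2 * (u / s - 1) = s * u - s^2" using s by (simp add: field_simps power2_eq_square)
  moreover have "f * ln (1 / w) - f * ln (1 / f) = - 2 * (s^2 * ln (u / s))"
    using s u by (simp add: ln_div ln_mult power2_eq_square algebra_simps)
  ultimately show ?thesis using sq s u by simp
qed

lemma pw3:
  fixes f g w :: real
  assumes "f \<ge> 0" "g \<ge> 0" "w \<ge> 0"
  shows "f + g - 2 * sqrt (f * g) \<le> 2 * (f + w - 2 * sqrt (f * w)) + 2 * (g + w - 2 * sqrt (g * w))"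
proof -
  define s where "s = sqrt f"
  define c where "c = sqrt g"
  define u where "u = sqrt w"
  have e: "f = s^2" "g = c^2" "w = u^2" unfolding s_def c_def u_def using assms by auto
  have m: "sqrt (f * g) = s * c" "sqrt (f * w) = s * u" "sqrt (g * w) = c * u"
    unfolding s_def c_def u_def by (simp_all add: real_sqrt_mult)
  have "0 \<le> (s + c - 2 * u)^2" by simp
  then show ?thesis unfolding m by (simp add: e power2_eq_square algebra_simps)
qed

lemma sqrt_le_avg:
  fixes f w :: real
  assumes "f \<ge> 0" "w \<ge> 0"
  shows "sqrt (f * w) \<le> (f + w) / 2"
proof -
  define s where "s = sqrt f"
  define u where "u = sqrt w"
  have e: "f = s^2" "w = u^2" unfolding s_def u_def using assms by auto
  have m: "sqrt (f * w) = s * u" unfolding s_def u_def by (simp add: real_sqrt_mult)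
  have "0 \<le> (s - u)^2" by simp
  then show ?thesis unfolding m by (simp add: e power2_eq_square algebra_simps)
qed


lemma shiftT:
  fixes pX pY :: "'a::ab_group_add pmf" and K :: "'a \<Rightarrow> 'c::comm_monoid_add"
  assumes fX: "finite (set_pmf pX)" and fY: "finite (set_pmf pY)"
    and x: "x \<in> set_pmf pX" and K0: "\<And>y. y \<notin> set_pmf pY \<Longrightarrow> K y = 0"
  shows "(\<Sum>z\<in>set_pmf (sum_dist pX pY). K (z - x)) = (\<Sum>y\<in>set_pmf pY. K y)"
  apply (rule sum_reindex_nz[where \<psi>="\<lambda>y. x + y"])
  using fX fY x K0 by (auto simp: set_sum_dist)

lemma hellinger_part:
  fixes pX pY :: "'a::ab_group_add pmf"
  assumes fX: "finite (set_pmf pX)" and fY: "finite (set_pmf pY)"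
    and small: "entropy_pmf (sum_dist pX pY) - entropy_pmf pY \<le> 1 / 16"
  shows "\<exists>S \<subseteq> set_pmf pX. sum (pmf pX) S \<ge> 1/2 \<and>
     (\<forall>x\<in>S. \<forall>x'\<in>S. (\<Sum>z\<in>set_pmf (sum_dist pX pY). sqrt (pmf pY (z - x) * pmf pY (z - x'))) \<ge> 3/4)"
proof -
  define SX where "SX = set_pmf pX"
  define T where "T = set_pmf (sum_dist pX pY)"
  define w where "w z = pmf (sum_dist pX pY) z" for z
  define f where "f x z = pmf pY (z - x)" for x z
  define bc where "bc x = (\<Sum>z\<in>T. sqrt (f x z * w z))" for x
  have fT: "finite T" unfolding T_def set_sum_dist using fX fY by simp
  have fSX: "finite SX" using fX SX_def by simp
  have sX: "sum (pmf pX) SX = 1" unfolding SX_def by (rule sum_pmf_eq_1) (use fX in auto)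
  have sf: "sum (f x) T = 1" if "x \<in> SX" for x
  proof -
    have "sum (f x) T = sum (pmf pY) (set_pmf pY)" unfolding f_def T_def
      by (rule shiftT) (use fX fY that SX_def in \<open>auto simp: set_pmf_iff\<close>)
    also have "\<dots> = 1" by (rule sum_pmf_eq_1) (use fY in auto)
    finally show ?thesis .
  qed
  have Hf: "(\<Sum>z\<in>T. f x z * ln (1 / f x z)) = entropy_pmf pY" if "x \<in> SX" for x
    unfolding f_def T_def entropy_pmf_def
    by (rule shiftT[where K="\<lambda>y. pmf pY y * ln (1 / pmf pY y)"]) (use fX fY that SX_def in \<open>auto simp: set_pmf_iff\<close>)
  have sw: "sum w T = 1" unfolding w_def T_def by (rule sum_pmf_eq_1) (use fT T_def in auto)
  have wf: "w z = (\<Sum>x\<in>SX. pmf pX x * f x z)" for z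
    unfolding w_def f_def SX_def by (rule pmf_sum_dist[OF fX])
  have w0: "w z \<ge> 0" for z unfolding w_def by simp
  have f0: "f x z \<ge> 0" for x z unfolding f_def by simp
  have wpos: "w z > 0" if "x \<in> SX" "f x z > 0" for x z
  proof -
    have "pmf pX x * f x z \<le> w z" unfolding wf
      by (rule member_le_sum) (use that f0 fSX in auto)
    moreover have "pmf pX x * f x z > 0" using that SX_def by (simp add: pmf_positive)
    ultimately show ?thesis by simp
  qed
  have HXY: "entropy_pmf (sum_dist pX pY) = (\<Sum>x\<in>SX. pmf pX x * (\<Sum>z\<in>T. f x z * ln (1 / w z)))"
  proof -
    have "entropy_pmf (sum_dist pX pY) = (\<Sum>z\<in>T. w z * ln (1 / w z))"
      unfolding entropy_pmf_def T_def w_def ..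
    also have "\<dots> = (\<Sum>z\<in>T. \<Sum>x\<in>SX. pmf pX x * (f x z * ln (1 / w z)))"
      unfolding wf by (simp add: sum_distrib_right mult.assoc)
    also have "\<dots> = (\<Sum>x\<in>SX. pmf pX x * (\<Sum>z\<in>T. f x z * ln (1 / w z)))"
      by (subst sum.swap) (simp add: sum_distrib_left)
    finally show ?thesis .
  qed
  have HY: "entropy_pmf pY = (\<Sum>x\<in>SX. pmf pX x * (\<Sum>z\<in>T. f x z * ln (1 / f x z)))"
  proof -
    have "(\<Sum>x\<in>SX. pmf pX x * (\<Sum>z\<in>T. f x z * ln (1 / f x z))) = (\<Sum>x\<in>SX. pmf pX x * entropy_pmf pY)"
      by (rule sum.cong) (auto simp: Hf)
    also have "\<dots> = entropy_pmf pY" using sX by (simp add: sum_distrib_right[symmetric])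
    finally show ?thesis by simp
  qed
  have bc1: "bc x \<le> 1" if "x \<in> SX" for x
  proof -
    have "bc x \<le> (\<Sum>z\<in>T. (f x z + w z) / 2)" unfolding bc_def
      by (rule sum_mono) (rule sqrt_le_avg; simp add: f0 w0)
    also have "\<dots> = 1" using sf[OF that] sw by (simp add: sum_divide_distrib[symmetric] sum.distrib)
    finally show ?thesis .
  qed
  have main: "(\<Sum>x\<in>SX. pmf pX x * (2 * (1 - bc x))) \<le> 1/16"
  proof -
    have "(\<Sum>x\<in>SX. pmf pX x * (2 * (1 - bc x)))
        = (\<Sum>x\<in>SX. pmf pX x * (\<Sum>z\<in>T. 2 * (f x z - sqrt (f x z * w z))))"
      apply (rule sum.cong[OF refl])
      using sf unfolding bc_def by (simp add: sum_subtractf sum_distrib_left[symmetric])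
    also have "\<dots> \<le> (\<Sum>x\<in>SX. pmf pX x * (\<Sum>z\<in>T. f x z * ln (1 / w z) - f x z * ln (1 / f x z)))"
      apply (rule sum_mono)
      apply (rule mult_left_mono)
       apply (rule sum_mono)
       apply (rule pw2)
      using f0 w0 wpos by auto
    also have "\<dots> = entropy_pmf (sum_dist pX pY) - entropy_pmf pY"
      unfolding HXY HY by (simp add: sum_subtractf right_diff_distrib)
    finally show ?thesis using small by simp
  qed
  define S where "S = {x\<in>SX. 1 - bc x \<le> 1/16}"
  define R where "R = SX - S"
  have SsX: "S \<subseteq> SX" unfolding S_def by auto
  have fS: "finite S" using SsX fSX finite_subset by blast
  have "(\<Sum>x\<in>R. pmf pX x * (1/8)) \<le> (\<Sum>x\<in>R. pmf pX x * (2 * (1 - bc x)))"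
    apply (rule sum_mono) apply (rule mult_left_mono) by (auto simp: R_def S_def)
  also have "\<dots> \<le> (\<Sum>x\<in>SX. pmf pX x * (2 * (1 - bc x)))"
    apply (rule sum_mono2[OF fSX]) using bc1 by (auto simp: R_def)
  finally have A: "(\<Sum>x\<in>R. pmf pX x * (1/8)) \<le> (\<Sum>x\<in>SX. pmf pX x * (2 * (1 - bc x)))" .
  have "(\<Sum>x\<in>R. pmf pX x * (1/8)) = sum (pmf pX) R * (1/8)" by (simp add: sum_distrib_right)
  then have r: "sum (pmf pX) R \<le> 1/2" using A main by linarith
  have "sum (pmf pX) S + sum (pmf pX) R = 1" unfolding R_def
    using sum.subset_diff[OF SsX fSX, of "pmf pX"] sX by simp
  then have q: "sum (pmf pX) S \<ge> 1/2" using r by simp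
  have pair: "(\<Sum>z\<in>T. sqrt (f x z * f x' z)) \<ge> 3/4" if "x \<in> S" "x' \<in> S" for x x'
  proof -
    have xs: "x \<in> SX" "x' \<in> SX" using that SsX by auto
    have "(\<Sum>z\<in>T. f x z + f x' z - 2 * sqrt (f x z * f x' z))
      \<le> (\<Sum>z\<in>T. 2 * (f x z + w z - 2 * sqrt (f x z * w z)) + 2 * (f x' z + w z - 2 * sqrt (f x' z * w z)))"
      by (rule sum_mono) (rule pw3; simp add: f0 w0)
    then have "2 - 2 * (\<Sum>z\<in>T. sqrt (f x z * f x' z)) \<le> 2 * (2 - 2 * bc x) + 2 * (2 - 2 * bc x')"
      using sf[OF xs(1)] sf[OF xs(2)] sw unfolding bc_def
      by (simp add: sum.distrib sum_subtractf sum_distrib_left[symmetric])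
    moreover have "1 - bc x \<le> 1/16" "1 - bc x' \<le> 1/16" using that S_def by auto
    ultimately show ?thesis by simp
  qed
  show ?thesis
    apply (rule exI[of _ S])
    using SsX q pair unfolding SX_def f_def T_def by auto
qed


lemma amgm_eps:
  fixes f g a e :: real
  assumes "f \<ge> 0" "g \<ge> 0" "e > 0"
  shows "sqrt (f * g) * a \<le> (f * a^2 / e + e * g) / 2"
proof -
  define s where "s = sqrt f"
  define c where "c = sqrt g"
  have ef: "f = s^2" "g = c^2" unfolding s_def c_def using assms by auto
  have m: "sqrt (f * g) = s * c" unfolding s_def c_def by (simp add: real_sqrt_mult)
  have "0 \<le> (s * a - e * c)^2" by simp
  then have "2 * e * (s * c * a) \<le> s^2 * a^2 + e^2 * c^2" by (simp add: power2_eq_square algebra_simps)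
  then have "s * c * a \<le> (s^2 * a^2 + e^2 * c^2) / (2 * e)" using assms by (simp add: field_simps)
  also have "\<dots> = (s^2 * a^2 / e + e * c^2) / 2" using assms by (simp add: field_simps power2_eq_square)
  finally show ?thesis unfolding m by (simp add: ef)
qed

lemma char_add: "\<gamma> \<in> characters \<Longrightarrow> \<gamma> (x + y) = \<gamma> x * \<gamma> y"
  by (simp add: characters_def)
lemma char_norm: "\<gamma> \<in> characters \<Longrightarrow> cmod (\<gamma> x) = 1"
  by (simp add: characters_def)

lemma char_cnj: "\<gamma> \<in> characters \<Longrightarrow> \<gamma> x * cnj (\<gamma> x) = 1"
proof -
  assume g: "\<gamma> \<in> characters"
  have "complex_of_real ((cmod (\<gamma> x))\<^sup>2) = \<gamma> x * cnj (\<gamma> x)" by (rule complex_norm_square)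
  then show ?thesis using char_norm[OF g] by simp
qed

lemma fourier_var:
  fixes pY :: "'a::ab_group_add pmf"
  assumes fY: "finite (set_pmf pY)" and g: "\<gamma> \<in> characters"
  shows "(\<Sum>y\<in>set_pmf pY. pmf pY y * (cmod (cnj (fourier_pmf pY \<gamma>) - \<gamma> y))\<^sup>2) = 1 - (cmod (fourier_pmf pY \<gamma>))\<^sup>2"
proof -
  define \<phi> where "\<phi> = fourier_pmf pY \<gamma>"
  define \<theta> where "\<theta> = cnj \<phi>"
  define SY where "SY = set_pmf pY"
  define p where "p y = complex_of_real (pmf pY y)" for y
  have s1: "(\<Sum>y\<in>SY. p y) = 1"
  proof -
    have "sum (pmf pY) SY = 1" unfolding SY_def by (rule sum_pmf_eq_1) (use fY in auto)
    then show ?thesis unfolding p_def by (metis of_real_1 of_real_sum)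
  qed
  have pc: "cnj (p y) = p y" for y by (simp add: p_def)
  have phi: "\<phi> = (\<Sum>y\<in>SY. p y * cnj (\<gamma> y))" unfolding \<phi>_def fourier_pmf_def SY_def p_def ..
  have cphi: "cnj \<phi> = (\<Sum>y\<in>SY. p y * \<gamma> y)" unfolding phi cnj_sum by (simp add: p_def)
  have "complex_of_real (\<Sum>y\<in>SY. pmf pY y * (cmod (\<theta> - \<gamma> y))\<^sup>2)
      = (\<Sum>y\<in>SY. p y * ((\<theta> - \<gamma> y) * cnj (\<theta> - \<gamma> y)))"
    by (simp only: of_real_sum of_real_mult complex_norm_square p_def)
  also have "\<dots> = (\<Sum>y\<in>SY. p y * (\<theta> * cnj \<theta>) - \<theta> * (p y * cnj (\<gamma> y)) - cnj \<theta> * (p y * \<gamma> y) + p y)"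
  proof (rule sum.cong[OF refl])
    fix y
    have "\<gamma> y * cnj (\<gamma> y) = 1" by (rule char_cnj[OF g])
    then show "p y * ((\<theta> - \<gamma> y) * cnj (\<theta> - \<gamma> y)) = p y * (\<theta> * cnj \<theta>) - \<theta> * (p y * cnj (\<gamma> y)) - cnj \<theta> * (p y * \<gamma> y) + p y"
      by (simp add: algebra_simps)
  qed
  also have "\<dots> = (\<theta> * cnj \<theta>) * (\<Sum>y\<in>SY. p y) - \<theta> * \<phi> - cnj \<theta> * cnj \<phi> + (\<Sum>y\<in>SY. p y)"
    unfolding cphi phi by (simp add: pc sum.distrib sum_subtractf sum_distrib_left sum_distrib_right mult.commute)
  also have "\<dots> = 1 - \<phi> * cnj \<phi>" unfolding s1 \<theta>_def by (simp add: algebra_simps)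
  also have "\<dots> = complex_of_real (1 - (cmod \<phi>)\<^sup>2)" by (simp only: of_real_diff of_real_1 complex_norm_square)
  finally show ?thesis unfolding \<theta>_def \<phi>_def SY_def of_real_eq_iff .
qed

lemma fourier_part:
  fixes pY :: "'a::ab_group_add pmf" and \<epsilon> :: real
  assumes fY: "finite (set_pmf pY)" and g: "\<gamma> \<in> characters"
    and spec: "(cmod (fourier_pmf pY \<gamma>))\<^sup>2 \<ge> 1 - \<epsilon>\<^sup>2 / 2" and e0: "0 < \<epsilon>" and e1: "\<epsilon> < 1"
    and fT: "finite T"
    and shx: "\<And>K::'a \<Rightarrow> real. (\<And>y. y \<notin> set_pmf pY \<Longrightarrow> K y = 0) \<Longrightarrow> (\<Sum>z\<in>T. K (z - x)) = (\<Sum>y\<in>set_pmf pY. K y)"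
    and shx': "\<And>K::'a \<Rightarrow> real. (\<And>y. y \<notin> set_pmf pY \<Longrightarrow> K y = 0) \<Longrightarrow> (\<Sum>z\<in>T. K (z - x')) = (\<Sum>y\<in>set_pmf pY. K y)"
    and BC: "(\<Sum>z\<in>T. sqrt (pmf pY (z - x) * pmf pY (z - x'))) \<ge> 3/4"
  shows "cmod (\<gamma> x - \<gamma> x') \<le> 4 * \<epsilon>"
proof -
  define \<phi> where "\<phi> = fourier_pmf pY \<gamma>"
  define \<theta> where "\<theta> = cnj \<phi>"
  define f where "f z = pmf pY (z - x)" for z
  define h where "h z = pmf pY (z - x')" for z
  define a where "a z = cmod (\<theta> - \<gamma> (z - x))" for z
  define b where "b z = cmod (\<theta> - \<gamma> (z - x'))" for z
  define \<Delta> where "\<Delta> = cmod (\<gamma> x - \<gamma> x')"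
  define bc where "bc = (\<Sum>z\<in>T. sqrt (f z * h z))"
  have var: "(\<Sum>y\<in>set_pmf pY. pmf pY y * (cmod (\<theta> - \<gamma> y))\<^sup>2) = 1 - (cmod \<phi>)\<^sup>2"
    unfolding \<theta>_def \<phi>_def by (rule fourier_var[OF fY g])
  have Ea: "(\<Sum>z\<in>T. f z * (a z)\<^sup>2) \<le> \<epsilon>\<^sup>2 / 2"
  proof -
    have "(\<Sum>z\<in>T. f z * (a z)\<^sup>2) = (\<Sum>y\<in>set_pmf pY. pmf pY y * (cmod (\<theta> - \<gamma> y))\<^sup>2)"
      unfolding f_def a_def by (rule shx) (simp add: set_pmf_iff)
    then show ?thesis using var spec \<phi>_def by simp
  qed
  have Eb: "(\<Sum>z\<in>T. h z * (b z)\<^sup>2) \<le> \<epsilon>\<^sup>2 / 2"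
  proof -
    have "(\<Sum>z\<in>T. h z * (b z)\<^sup>2) = (\<Sum>y\<in>set_pmf pY. pmf pY y * (cmod (\<theta> - \<gamma> y))\<^sup>2)"
      unfolding h_def b_def by (rule shx') (simp add: set_pmf_iff)
    then show ?thesis using var spec \<phi>_def by simp
  qed
  have s1: "sum (pmf pY) (set_pmf pY) = 1" by (rule sum_pmf_eq_1) (use fY in auto)
  have sf: "sum f T = 1" unfolding f_def using shx[of "pmf pY"] s1 by (simp add: set_pmf_iff)
  have sh: "sum h T = 1" unfolding h_def using shx'[of "pmf pY"] s1 by (simp add: set_pmf_iff)
  have pw: "cmod \<theta> * \<Delta> \<le> a z + b z" for z
  proof -
    have e1: "\<gamma> z = \<gamma> x * \<gamma> (z - x)" using char_add[OF g, of x "z - x"] by simp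
    have e2: "\<gamma> z = \<gamma> x' * \<gamma> (z - x')" using char_add[OF g, of x' "z - x'"] by simp
    have "\<theta> * (\<gamma> x - \<gamma> x') = \<gamma> x * (\<theta> - \<gamma> (z - x)) - \<gamma> x' * (\<theta> - \<gamma> (z - x'))"
      using e1 e2 by (simp add: algebra_simps)
    then have "cmod \<theta> * \<Delta> = cmod (\<gamma> x * (\<theta> - \<gamma> (z - x)) - \<gamma> x' * (\<theta> - \<gamma> (z - x')))"
      unfolding \<Delta>_def by (metis norm_mult)
    also have "\<dots> \<le> cmod (\<gamma> x * (\<theta> - \<gamma> (z - x))) + cmod (\<gamma> x' * (\<theta> - \<gamma> (z - x')))"
      by (rule norm_triangle_ineq4)
    also have "\<dots> = a z + b z" unfolding a_def b_def by (simp add: norm_mult char_norm[OF g])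
    finally show ?thesis .
  qed
  have "cmod \<theta> * \<Delta> * bc = (\<Sum>z\<in>T. sqrt (f z * h z) * (cmod \<theta> * \<Delta>))"
    unfolding bc_def by (simp add: sum_distrib_left mult.commute)
  also have "\<dots> \<le> (\<Sum>z\<in>T. sqrt (f z * h z) * a z + sqrt (h z * f z) * b z)"
  proof (rule sum_mono)
    fix z
    have "sqrt (f z * h z) * (cmod \<theta> * \<Delta>) \<le> sqrt (f z * h z) * (a z + b z)"
      by (rule mult_left_mono[OF pw]) (simp add: f_def h_def)
    moreover have "sqrt (h z * f z) = sqrt (f z * h z)" by (simp add: mult.commute)
    ultimately show "sqrt (f z * h z) * (cmod \<theta> * \<Delta>) \<le> sqrt (f z * h z) * a z + sqrt (h z * f z) * b z"
      by (metis distrib_left)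
  qed
  also have "\<dots> \<le> (\<Sum>z\<in>T. (f z * (a z)^2 / \<epsilon> + \<epsilon> * h z) / 2 + (h z * (b z)^2 / \<epsilon> + \<epsilon> * f z) / 2)"
    apply (rule sum_mono) apply (rule add_mono)
    by (rule amgm_eps; simp add: f_def h_def e0)+
  also have "\<dots> = ((\<Sum>z\<in>T. f z * (a z)^2) / \<epsilon> + \<epsilon> * sum h T + (\<Sum>z\<in>T. h z * (b z)^2) / \<epsilon> + \<epsilon> * sum f T) / 2"
    by (simp add: sum.distrib sum_divide_distrib[symmetric] sum_distrib_left add_divide_distrib)
  also have "\<dots> \<le> ((\<epsilon>\<^sup>2 / 2) / \<epsilon> + \<epsilon> + (\<epsilon>\<^sup>2 / 2) / \<epsilon> + \<epsilon>) / 2"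
  proof -
    have d1: "(\<Sum>z\<in>T. f z * (a z)^2) / \<epsilon> \<le> (\<epsilon>\<^sup>2 / 2) / \<epsilon>" by (rule divide_right_mono[OF Ea]) (use e0 in simp)
    have d2: "(\<Sum>z\<in>T. h z * (b z)^2) / \<epsilon> \<le> (\<epsilon>\<^sup>2 / 2) / \<epsilon>" by (rule divide_right_mono[OF Eb]) (use e0 in simp)
    have gen: "\<And>A B C::real. A \<le> C \<Longrightarrow> B \<le> C \<Longrightarrow> (A + \<epsilon> * 1 + B + \<epsilon> * 1) / 2 \<le> (C + \<epsilon> + C + \<epsilon>) / 2"
      by (intro divide_right_mono add_mono) auto
    show ?thesis unfolding sf sh by (rule gen[OF d1 d2])
  qed
  also have "\<dots> = 3 * \<epsilon> / 2" using e0 by (simp add: power2_eq_square field_simps)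
  finally have up: "cmod \<theta> * \<Delta> * bc \<le> 3 * \<epsilon> / 2" .
  have "(cmod \<phi>)\<^sup>2 \<ge> 1/4"
  proof -
    have "\<epsilon>\<^sup>2 \<le> 1" using e0 e1 by (simp add: power_le_one)
    then show ?thesis using spec \<phi>_def by simp
  qed
  then have th: "cmod \<theta> \<ge> 1/2" unfolding \<theta>_def complex_mod_cnj
  proof -
    assume a: "(cmod \<phi>)\<^sup>2 \<ge> 1/4"
    show "cmod \<phi> \<ge> 1/2"
    proof (rule ccontr)
      assume "\<not> cmod \<phi> \<ge> 1/2"
      then have "cmod \<phi> < 1/2" by simp
      then have "(cmod \<phi>)\<^sup>2 < (1/2)\<^sup>2" by (rule power_strict_mono) auto
      then show False using a by (simp add: power2_eq_square)
    qed
  qed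
  have bc: "bc \<ge> 3/4" using BC unfolding bc_def f_def h_def .
  have "(1/2) * (3/4) \<le> cmod \<theta> * bc" by (rule mult_mono) (use th bc in auto)
  then have m38: "3/8 \<le> cmod \<theta> * bc" by simp
  have "(3/8) * \<Delta> \<le> cmod \<theta> * bc * \<Delta>" by (rule mult_right_mono[OF m38]) (simp add: \<Delta>_def)
  then have "(3/8) * \<Delta> \<le> 3 * \<epsilon> / 2" using up by (simp add: mult.commute mult.left_commute)
  then show ?thesis unfolding \<Delta>_def by simp
qed


theorem proposition4p2:
  fixes pX pY pZ :: "'a::ab_group_add pmf" and \<epsilon> :: real
  assumes "finite (set_pmf pX)" and "finite (set_pmf pY)" and "finite (set_pmf pZ)"
    and "entropy_pmf (sum_dist pX pY) - entropy_pmf pY \<le> 1 / 16"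
    and "0 < \<epsilon>" and "\<epsilon> < 1"
  shows "\<exists>S. S \<subseteq> set_pmf pX \<and> S \<noteq> {} \<and>
           ln (real (card S)) \<ge> entropy_pmf pZ - 4 * ruzsa_dist pX pZ - 2 * ln 2 \<and>
           {s - s' | s s'. s \<in> S \<and> s' \<in> S} \<subseteq> bohr_set (LSpec pY \<epsilon>) (4 * \<epsilon>)"
proof -
  note fX = assms(1) and fY = assms(2) and fZ = assms(3)
  define T where "T = set_pmf (sum_dist pX pY)"
  have fT: "finite T" unfolding T_def set_sum_dist using fX fY by simp
  obtain S where SsX: "S \<subseteq> set_pmf pX" and q: "sum (pmf pX) S \<ge> 1/2"
    and pair: "\<And>x x'. x \<in> S \<Longrightarrow> x' \<in> S \<Longrightarrow>
        (\<Sum>z\<in>T. sqrt (pmf pY (z - x) * pmf pY (z - x'))) \<ge> 3/4"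
    using hellinger_part[OF fX fY assms(4)] unfolding T_def by blast
  have sh: "\<And>x (K::'a \<Rightarrow> real). x \<in> set_pmf pX \<Longrightarrow> (\<And>y. y \<notin> set_pmf pY \<Longrightarrow> K y = 0) \<Longrightarrow>
      (\<Sum>z\<in>T. K (z - x)) = (\<Sum>y\<in>set_pmf pY. K y)"
    unfolding T_def by (rule shiftT[OF fX fY])
  have ne: "S \<noteq> {}" using q by auto
  have lnb: "ln (real (card S)) \<ge> entropy_pmf pZ - 4 * ruzsa_dist pX pZ - 2 * ln 2"
    by (rule entropy_part[OF fX fZ SsX q])
  have bohr: "{s - s' | s s'. s \<in> S \<and> s' \<in> S} \<subseteq> bohr_set (LSpec pY \<epsilon>) (4 * \<epsilon>)"
  proof
    fix d assume "d \<in> {s - s' | s s'. s \<in> S \<and> s' \<in> S}"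
    then obtain s s' where d: "d = s - s'" and s: "s \<in> S" and s': "s' \<in> S" by blast
    show "d \<in> bohr_set (LSpec pY \<epsilon>) (4 * \<epsilon>)" unfolding bohr_set_def
    proof (intro CollectI ballI)
      fix \<gamma> assume g: "\<gamma> \<in> LSpec pY \<epsilon>"
      then have gc: "\<gamma> \<in> characters" and spec: "(cmod (fourier_pmf pY \<gamma>))\<^sup>2 \<ge> 1 - \<epsilon>\<^sup>2 / 2"
        unfolding LSpec_def by auto
      have sx: "s \<in> set_pmf pX" "s' \<in> set_pmf pX" using s s' SsX by auto
      have "cmod (\<gamma> s - \<gamma> s') \<le> 4 * \<epsilon>"
        by (rule fourier_part[OF fY gc spec assms(5) assms(6) fT sh[OF sx(1)] sh[OF sx(2)] pair[OF s s']])
      moreover have "\<gamma> s = \<gamma> d * \<gamma> s'" using char_add[OF gc, of d s'] d by simp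
      moreover have "cmod (\<gamma> s') = 1" by (rule char_norm[OF gc])
      ultimately have "cmod (\<gamma> s' * (\<gamma> d - 1)) \<le> 4 * \<epsilon>" by (simp add: algebra_simps)
      then show "cmod (\<gamma> d - 1) \<le> 4 * \<epsilon>" using \<open>cmod (\<gamma> s') = 1\<close> by (simp add: norm_mult)
    qed
  qed
  show ?thesis using SsX ne lnb bohr by blast
qed

end
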